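(* If $n\ge 0$ is an integer such that $\deg_t\bigl(B_{n+1}(t)-B_n(t)\bigr)=1$, then $n=1$, and $B_2(t)-B_1(t)=t-1$.
   Context: The Stern polynomials $B_n(t)\in\mathbb{Z}[t]$, $n\ge 0$, are defined by $B_0(t)=0$, $B_1(t)=1$, $B_{2n}(t)=tB_n(t)$ and $B_{2n+1}(t)=B_n(t)+B_{n+1}(t)$ for $n\ge 1$. *)

theory Defs
  imports "HOL-Computational_Algebra.Polynomial"
begin

function stern_poly :: "nat \<Rightarrow> int poly" where
  "stern_poly n =
     (if n = 0 then 0
      else if n = 1 then 1
      else if even n then [:0, 1:] * stern_poly (n div 2)
      else stern_poly (n div 2) + stern_poly (n div 2 + 1))"
  by auto
termination
  by (relation "measure id") (auto elim: oddE)

end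

theory Submission
  imports Defs
begin

declare stern_poly.simps[simp del]

lemma sp0: "stern_poly 0 = 0" by (subst stern_poly.simps) simp
lemma sp1: "stern_poly 1 = 1" by (subst stern_poly.simps) simp
lemma sp1': "stern_poly (Suc 0) = 1" using sp1 by simp
lemma spE: "n \<ge> 1 \<Longrightarrow> stern_poly (2*n) = [:0,1:] * stern_poly n"
  by (subst stern_poly.simps) simp
lemma spO: "n \<ge> 1 \<Longrightarrow> stern_poly (2*n+1) = stern_poly n + stern_poly (n+1)"
  by (subst stern_poly.simps) simp

lemma sp_two: "poly (stern_poly n) 2 = int n"
proof (induction n rule: less_induct)
  case (less n)
  show ?case
  proof (cases "n \<le> 1")
    case True then show ?thesis by (cases n) (auto simp: sp0 sp1')
  next
    case False
    obtain m where "n = 2*m \<or> n = 2*m+1" by (metis oddE evenE)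
    then show ?thesis
    proof
      assume h: "n = 2*m"
      then have "m \<ge> 1" "m < n" using False by auto
      then show ?thesis using h less spE by simp
    next
      assume h: "n = 2*m+1"
      then have "m \<ge> 1" "m < n" "m+1 < n" using False by auto
      then show ?thesis using h less[of m] less[of "m+1"] spO by simp
    qed
  qed
qed

lemma sp_zero: "poly (stern_poly n) 0 = (if odd n then 1 else 0)"
proof (induction n rule: less_induct)
  case (less n)
  show ?case
  proof (cases "n \<le> 1")
    case True then show ?thesis by (cases n) (auto simp: sp0 sp1')
  next
    case False
    obtain m where "n = 2*m \<or> n = 2*m+1" by (metis oddE evenE)
    then show ?thesis
    proof
      assume h: "n = 2*m"
      then have "m \<ge> 1" "m < n" using False by auto
      then show ?thesis using h less spE by simp
    next
      assume h: "n = 2*m+1"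
      then have "m \<ge> 1" "m < n" "m+1 < n" using False by auto
      then show ?thesis using h less[of m] less[of "m+1"] spO by auto
    qed
  qed
qed

lemma sp_one: "n \<ge> 1 \<Longrightarrow> poly (stern_poly n) 1 > 0"
proof (induction n rule: less_induct)
  case (less n)
  show ?case
  proof (cases "n \<le> 1")
    case True then show ?thesis using less.prems by (auto simp: sp1')
  next
    case False
    obtain m where "n = 2*m \<or> n = 2*m+1" by (metis oddE evenE)
    then show ?thesis
    proof
      assume h: "n = 2*m"
      then have "m \<ge> 1" "m < n" using False by auto
      then show ?thesis using h less spE by simp
    next
      assume h: "n = 2*m+1"
      then have "m \<ge> 1" "m < n" "m+1 < n" using False by auto
      then show ?thesis using h less.IH[of m] less.IH[of "m+1"] spO by simp
    qed
  qed
qed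

theorem theorem5p4:
  fixes n :: nat
  assumes "degree (stern_poly (n + 1) - stern_poly n) = 1"
  shows "n = 1 \<and> stern_poly 2 - stern_poly 1 = [:-1, 1:]"
proof -
  define D where "D = stern_poly (n + 1) - stern_poly n"
  have dg: "degree D = 1" using assms D_def by simp
  have Deq: "D = [:coeff D 0, coeff D 1:]"
    by (rule poly_eqI) (auto simp: coeff_pCons split: nat.splits intro: coeff_eq_0 dest: le_degree simp: dg)
  have p2: "poly D 2 = 1" unfolding D_def by (simp add: sp_two)
  have p0: "poly D 0 = coeff D 0" by (subst Deq) simp
  have c1: "coeff D 1 \<noteq> 0" using dg by (metis leading_coeff_0_iff degree_0 zero_neq_one)
  have p2': "poly D 2 = coeff D 0 + 2 * coeff D 1" by (subst Deq) simp
  have "odd n"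
  proof (rule ccontr)
    assume "\<not> odd n"
    then have "poly D 0 = 1" unfolding D_def by (simp add: sp_zero)
    then show False using p0 p2 p2' c1 by simp
  qed
  then have "poly D 0 = -1" unfolding D_def by (simp add: sp_zero)
  then have "coeff D 1 = 1" using p0 p2 p2' by simp
  then have "poly D 1 = 0" using p0 p2 p2' \<open>poly D 0 = -1\<close> by (subst Deq) simp
  obtain m where m: "n = 2*m+1" using \<open>odd n\<close> oddE by blast
  have "m = 0"
  proof (rule ccontr)
    assume "m \<noteq> 0"
    then have "m \<ge> 1" by simp
    have "stern_poly (n+1) = [:0,1:] * stern_poly (m+1)"
      using spE[of "m+1"] m by (simp add: algebra_simps)
    moreover have "stern_poly n = stern_poly m + stern_poly (m+1)" using spO[OF \<open>m\<ge>1\<close>] m by simp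
    ultimately have "poly D 1 = - poly (stern_poly m) 1" unfolding D_def by simp
    then show False using sp_one[OF \<open>m \<ge> 1\<close>] \<open>poly D 1 = 0\<close> by simp
  qed
  then have "n = 1" using m by simp
  moreover have "stern_poly 2 = [:0,1:]" using spE[of 1] by (simp add: sp1' one_pCons)
  ultimately show ?thesis by (simp add: sp1' one_pCons)
qed

end
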